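(* For every integer $n\geq 2$, there is a binary tree with $n$ leaves, all at depth $\lceil \log n \rceil$, and at most $2n+\lceil \log n \rceil-2$ vertices.
   Context: A binary tree is a rooted tree in which every vertex has at most two children. The depth of a vertex is its distance from the root. $\log$ denotes the logarithm to base $2$. *)

theory Defs
  imports Complex_Main
begin

datatype rtree = V "rtree list"

fun binary :: "rtree \<Rightarrow> bool" where
  "binary (V ts) = (length ts \<le> 2 \<and> (\<forall>t\<in>set ts. binary t))"

fun num_vertices :: "rtree \<Rightarrow> nat" where
  "num_vertices (V ts) = 1 + sum_list (map num_vertices ts)"

fun leaf_depths :: "rtree \<Rightarrow> nat list" where
  "leaf_depths (V []) = [0]"
| "leaf_depths (V (t # ts)) = map Suc (concat (map leaf_depths (t # ts)))"

end

theory Submission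
  imports Defs
begin

fun full :: "nat \<Rightarrow> rtree" where
  "full 0 = V []"
| "full (Suc d) = V [full d, full d]"

lemma full_props:
  "binary (full d) \<and> length (leaf_depths (full d)) = 2^d \<and> set (leaf_depths (full d)) \<subseteq> {d}
   \<and> num_vertices (full d) + 1 = 2^(Suc d)"
  by (induction d) auto

lemma gen:
  "1 \<le> n \<Longrightarrow> n \<le> 2^d \<Longrightarrow> \<exists>t. binary t \<and> length (leaf_depths t) = n
     \<and> set (leaf_depths t) \<subseteq> {d} \<and> num_vertices t + 1 \<le> 2*n + d"
proof (induction d arbitrary: n)
  case 0
  then have "n = 1" by simp
  then show ?case by (intro exI[of _ "V []"]) auto
next
  case (Suc d)
  show ?case
  proof (cases "n \<le> 2^d")
    case True
    with Suc obtain t where t: "binary t" "length (leaf_depths t) = n"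
      "set (leaf_depths t) \<subseteq> {d}" "num_vertices t + 1 \<le> 2*n + d" by blast
    show ?thesis using t by (intro exI[of _ "V [t]"]) auto
  next
    case False
    have "1 \<le> n - 2^d" "n - 2^d \<le> 2^d" using False Suc.prems by auto
    then obtain t where t: "binary t" "length (leaf_depths t) = n - 2^d"
      "set (leaf_depths t) \<subseteq> {d}" "num_vertices t + 1 \<le> 2*(n - 2^d) + d" using Suc.IH by blast
    show ?thesis using t full_props[of d] False
      by (intro exI[of _ "V [full d, t]"]) auto
  qed
qed

lemma gen2:
  "2^d < n \<Longrightarrow> n \<le> 2^(Suc d) \<Longrightarrow> \<exists>t. binary t \<and> length (leaf_depths t) = n
     \<and> set (leaf_depths t) \<subseteq> {Suc d} \<and> num_vertices t + 2 \<le> 2*n + Suc d"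
proof -
  assume a: "2^d < n" "n \<le> 2^(Suc d)"
  then obtain t where t: "binary t" "length (leaf_depths t) = n - 2^d"
      "set (leaf_depths t) \<subseteq> {d}" "num_vertices t + 1 \<le> 2*(n - 2^d) + d"
    using gen[of "n - 2^d" d] by fastforce
  show ?thesis using t full_props[of d] a
    by (intro exI[of _ "V [full d, t]"]) auto
qed

lemma exm: "(2::nat) \<le> n \<Longrightarrow> \<exists>m. 2^m < n \<and> n \<le> 2^(Suc m)"
proof -
  assume n: "2 \<le> n"
  define k where "k = (LEAST k. n \<le> (2::nat)^k)"
  have ex: "n \<le> 2^n" using less_exp[of n] by simp
  have k1: "n \<le> 2^k" unfolding k_def by (rule LeastI[of _ n]) (rule ex)
  have "k \<noteq> 0" using k1 n by (cases k) auto
  then obtain m where m: "k = Suc m" by (cases k) auto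
  have "\<not> n \<le> 2^m" using not_less_Least[of m "\<lambda>k. n \<le> (2::nat)^k"] m k_def by simp
  then show ?thesis using k1 m by (intro exI[of _ m]) auto
qed

theorem lemma2p1:
  fixes n :: nat
  assumes "n \<ge> 2"
  shows "\<exists>t. binary t
           \<and> length (leaf_depths t) = n
           \<and> (\<forall>d\<in>set (leaf_depths t). int d = \<lceil>log 2 (real n)\<rceil>)
           \<and> int (num_vertices t) \<le> 2 * int n + \<lceil>log 2 (real n)\<rceil> - 2"
proof -
  obtain m where m: "2^m < n" "n \<le> 2^(Suc m)" using exm assms by blast
  have c: "\<lceil>log 2 (real n)\<rceil> = int m + 1"
    using ceiling_log_nat_eq_if[of 2 m n] m by simp
  obtain t where t: "binary t" "length (leaf_depths t) = n"
     "set (leaf_depths t) \<subseteq> {Suc m}" "num_vertices t + 2 \<le> 2*n + Suc m"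
    using gen2[OF m] by blast
  show ?thesis using t c by (intro exI[of _ t]) auto
qed

end
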